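(* Let $\omega$ be a primitive third root of unity, $S=\mathbb{C}\langle x,y,z\rangle/(x^2,y^2,z^2)$, and for $t\in\mathbb{C}^*$ let $T_t$ be the quotient of $S$ by the two-sided ideal generated by $(zxy+\omega xyz+\omega^2 yzx)+t(yxz+\omega zyx+\omega^2 xzy)$ and $(zxy+\omega^2 xyz+\omega yzx)+t(yxz+\omega^2 zyx+\omega xzy)$. Let $g_t=(zxy+xyz+yzx)+t(yxz+zyx+xzy)$ and $M_t=T_t/(g_t)$. Then for every $t\in\mathbb{C}^*$, the Hilbert series of $M_t$ is $\frac{1-s^3}{(1-s)^3}$.
   Context: Grading: $\deg x=\deg y=\deg z=1$. The Hilbert series is $\sum_k\dim (M_t)_k s^k$. *)

theory Defs
  imports Complex_Main "HOL-Library.Function_Algebras" "HOL-Computational_Algebra.Formal_Power_Series"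
begin

text \<open>Free associative algebra C<x,y,z>: a noncommutative polynomial is represented by
its coefficient function on words over the three generators (elements of the free algebra
are those with finite support; all polynomials occurring below have finite support).\<close>

datatype gen = X | Y | Z

type_synonym ncpoly = "gen list \<Rightarrow> complex"

definition nc_scale :: "complex \<Rightarrow> ncpoly \<Rightarrow> ncpoly" where
  "nc_scale c p = (\<lambda>w. c * p w)"

definition nc_span :: "ncpoly set \<Rightarrow> ncpoly set" where
  "nc_span = module.span nc_scale"

definition nc_dim :: "ncpoly set \<Rightarrow> nat" where
  "nc_dim = vector_space.dim nc_scale"

definition nc_mult :: "ncpoly \<Rightarrow> ncpoly \<Rightarrow> ncpoly" where
  "nc_mult p q = (\<lambda>w. \<Sum>i\<le>length w. p (take i w) * q (drop i w))"

definition mono :: "gen list \<Rightarrow> ncpoly" where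
  "mono u = (\<lambda>w. if w = u then 1 else 0)"

definition poly_of :: "(complex \<times> gen list) list \<Rightarrow> ncpoly" where
  "poly_of ts = (\<lambda>w. \<Sum>(c, u)\<leftarrow>ts. if u = w then c else 0)"

definition two_sided_ideal :: "ncpoly set \<Rightarrow> ncpoly set" where
  "two_sided_ideal G = nc_span {nc_mult (nc_mult (mono u) g) (mono v) | u g v. g \<in> G}"

definition homog :: "nat \<Rightarrow> ncpoly set" where
  "homog k = {p. \<forall>w. length w \<noteq> k \<longrightarrow> p w = 0}"

text \<open>For a homogeneous ideal I, the degree-k component of C<x,y,z>/I is
  homog k / (I \<inter> homog k); its dimension:\<close>
definition quot_graded_dim :: "ncpoly set \<Rightarrow> nat \<Rightarrow> nat" where
  "quot_graded_dim I k = nc_dim (homog k) - nc_dim (I \<inter> homog k)"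

definition hilbert_series :: "ncpoly set \<Rightarrow> rat fps" where
  "hilbert_series I = Abs_fps (\<lambda>k. of_nat (quot_graded_dim I k))"

definition rel_sq :: "ncpoly set" where
  "rel_sq = {mono [X, X], mono [Y, Y], mono [Z, Z]}"

definition rel1 :: "complex \<Rightarrow> complex \<Rightarrow> ncpoly" where
  "rel1 \<omega> t = poly_of [(1, [Z,X,Y]), (\<omega>, [X,Y,Z]), (\<omega>^2, [Y,Z,X]),
                        (t, [Y,X,Z]), (t * \<omega>, [Z,Y,X]), (t * \<omega>^2, [X,Z,Y])]"

definition rel2 :: "complex \<Rightarrow> complex \<Rightarrow> ncpoly" where
  "rel2 \<omega> t = poly_of [(1, [Z,X,Y]), (\<omega>^2, [X,Y,Z]), (\<omega>, [Y,Z,X]),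
                        (t, [Y,X,Z]), (t * \<omega>^2, [Z,Y,X]), (t * \<omega>, [X,Z,Y])]"

definition g_rel :: "complex \<Rightarrow> ncpoly" where
  "g_rel t = poly_of [(1, [Z,X,Y]), (1, [X,Y,Z]), (1, [Y,Z,X]),
                      (t, [Y,X,Z]), (t, [Z,Y,X]), (t, [X,Z,Y])]"

text \<open>M_t = T_t/(g_t) = C<x,y,z>/I_t, with I_t generated by x^2,y^2,z^2 and the three cubics.\<close>
definition M_ideal :: "complex \<Rightarrow> complex \<Rightarrow> ncpoly set" where
  "M_ideal \<omega> t = two_sided_ideal (rel_sq \<union> {rel1 \<omega> t, rel2 \<omega> t, g_rel t})"

end

theory Submission
  imports Defs "HOL-Library.Multiset"
begin


interpretation nc: vector_space nc_scale
  by unfold_locales (auto simp: nc_scale_def fun_eq_iff algebra_simps)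

lemma ncspan: "nc_span = nc.span" by (simp add: nc_span_def)
lemma ncdim: "nc_dim = nc.dim" by (simp add: nc_dim_def)

lemma mult_mono_left: "nc_mult (mono u) p = (\<lambda>w. if take (length u) w = u then p (drop (length u) w) else 0)"
proof (rule ext)
  fix w
  have "(\<Sum>i\<le>length w. mono u (take i w) * p (drop i w)) =
        (\<Sum>i\<le>length w. if i = length u then (if take (length u) w = u then p (drop (length u) w) else 0) else 0)"
  proof (rule sum.cong[OF refl])
    fix i assume i: "i \<in> {..length w}"
    show "mono u (take i w) * p (drop i w) = (if i = length u then (if take (length u) w = u then p (drop (length u) w) else 0) else 0)"
    proof -
      have "take i w = u \<Longrightarrow> i = length u" using i by auto
      thus ?thesis by (cases "i = length u") (auto simp add: mono_def)
    qed
  qed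
  also have "\<dots> = (if take (length u) w = u then p (drop (length u) w) else 0)"
    by (auto simp: sum.delta)
  finally show "nc_mult (mono u) p w = (if take (length u) w = u then p (drop (length u) w) else 0)"
    by (simp add: nc_mult_def)
qed

lemma mult_mono_right: "nc_mult p (mono v) = (\<lambda>w. if length v \<le> length w \<and> drop (length w - length v) w = v then p (take (length w - length v) w) else 0)"
proof (rule ext)
  fix w
  have "(\<Sum>i\<le>length w. p (take i w) * mono v (drop i w)) =
        (\<Sum>i\<le>length w. if i = length w - length v then (if length v \<le> length w \<and> drop (length w - length v) w = v then p (take (length w - length v) w) else 0) else 0)"
  proof (rule sum.cong[OF refl])
    fix i assume i: "i \<in> {..length w}"
    show "p (take i w) * mono v (drop i w) = (if i = length w - length v then (if length v \<le> length w \<and> drop (length w - length v) w = v then p (take (length w - length v) w) else 0) else 0)"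
      using i by (auto simp: mono_def)
  qed
  also have "\<dots> = (if length v \<le> length w \<and> drop (length w - length v) w = v then p (take (length w - length v) w) else 0)"
    by (auto simp: sum.delta)
  finally show "nc_mult p (mono v) w = (if length v \<le> length w \<and> drop (length w - length v) w = v then p (take (length w - length v) w) else 0)"
    by (simp add: nc_mult_def)
qed

definition MM :: "gen list \<Rightarrow> ncpoly \<Rightarrow> gen list \<Rightarrow> ncpoly" where
  "MM u g v = nc_mult (nc_mult (mono u) g) (mono v)"

lemma MM_add: "MM u (p + q) v = MM u p v + MM u q v"
  by (simp add: MM_def mult_mono_left mult_mono_right fun_eq_iff)
lemma MM_scale: "MM u (nc_scale c p) v = nc_scale c (MM u p v)"
  by (simp add: MM_def mult_mono_left mult_mono_right fun_eq_iff nc_scale_def)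
lemma MM_mono: "MM u (mono m) v = mono (u @ m @ v)"
proof (rule ext)
  fix w
  show "MM u (mono m) v w = mono (u @ m @ v) w"
  proof (cases "w = u @ m @ v")
    case True thus ?thesis by (simp add: MM_def mult_mono_left mult_mono_right, simp add: mono_def)
  next
    case False
    have "\<not> (length v \<le> length w \<and> drop (length w - length v) w = v \<and>
         take (length u) (take (length w - length v) w) = u \<and>
         drop (length u) (take (length w - length v) w) = m)"
    proof
      assume h: "length v \<le> length w \<and> drop (length w - length v) w = v \<and>
         take (length u) (take (length w - length v) w) = u \<and>
         drop (length u) (take (length w - length v) w) = m"
      have "w = take (length w - length v) w @ v" using h by (metis append_take_drop_id)
      also have "take (length w - length v) w = u @ m" using h by (metis append_take_drop_id)
      finally show False using False by simp
    qed
    thus ?thesis using False by (simp add: MM_def mult_mono_left mult_mono_right, auto simp: mono_def)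
  qed
qed



fun rk :: "gen \<Rightarrow> nat" where "rk X = 0" | "rk Y = 1" | "rk Z = 2"
fun nxt :: "gen \<Rightarrow> gen" where "nxt X = Y" | "nxt Y = Z" | "nxt Z = X"

lemma rk_inj: "inj rk" by (rule injI) (case_tac x; case_tac y; simp)
lemma rk_eq[simp]: "rk a = rk b \<longleftrightarrow> a = b" using rk_inj by (auto dest: injD)

fun evs :: "gen list \<Rightarrow> gen list" and ods :: "gen list \<Rightarrow> gen list" where
  "evs [] = []" | "evs (a # r) = a # ods r" | "ods [] = []" | "ods (a # r) = evs r"

fun altw :: "gen \<Rightarrow> gen \<Rightarrow> nat \<Rightarrow> gen list" where
  "altw a b 0 = []" | "altw a b (Suc n) = a # altw b a n"

fun alt :: "gen list \<Rightarrow> bool" where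
  "alt (a # b # c # r) = (a = c \<and> alt (b # c # r))" | "alt _ = True"

fun nf :: "gen list \<Rightarrow> bool" where
  "nf [] = True" | "nf [a] = True" | "nf [a, b] = (a \<noteq> b)"
| "nf (a # b # c # r) = (nf (b # c # r) \<and> (a = c \<or> (a \<noteq> b \<and> a \<noteq> c \<and> alt (b # c # r) \<and> rk a < rk c)))"

fun red :: "gen list \<Rightarrow> bool" where
  "red (a # b # r) = (a \<noteq> b \<and> red (b # r))" | "red _ = True"

fun F :: "gen list \<Rightarrow> nat" where
  "F [] = 0" | "F (a # r) = count_list (ods r) (nxt a) + F r"

definition pm :: "gen list \<Rightarrow> gen multiset \<times> gen multiset" where
  "pm w = (mset (evs w), mset (ods w))"

lemma evs_ods_inj: "evs w = evs w' \<Longrightarrow> ods w = ods w' \<Longrightarrow> w = w'"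
proof (induction w arbitrary: w')
  case Nil thus ?case by (cases w') auto
next
  case (Cons a w) thus ?case by (cases w') auto
qed

lemma evs_ods_append: "evs (u @ v) = evs u @ (if even (length u) then evs v else ods v) \<and>
   ods (u @ v) = ods u @ (if even (length u) then ods v else evs v)"
  by (induction u) auto

lemma pm_move: "pm (u @ [a,b,c] @ v) = pm (u @ [c,b,a] @ v)"
  by (simp add: pm_def evs_ods_append)

lemma mset_ods_move: "mset (ods (u @ [a,b,c] @ v)) = mset (ods (u @ [c,b,a] @ v))"
  using pm_move[of u a b c v] by (simp add: pm_def)

lemma F_move: assumes "b = nxt a" "c = nxt b"
  shows "F (u @ [c,b,a] @ v) = Suc (F (u @ [a,b,c] @ v))"
proof (induction u)
  case Nil
  have "nxt c = a" "a \<noteq> b" "b \<noteq> c" "a \<noteq> c" using assms by (cases a; simp)+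
  thus ?case using assms by simp
next
  case (Cons x u)
  have "count_list (ods (u @ [c,b,a] @ v)) (nxt x) = count_list (ods (u @ [a,b,c] @ v)) (nxt x)"
    by (metis count_mset mset_ods_move)
  thus ?case using Cons by simp
qed

definition live :: "gen list \<Rightarrow> bool" where
  "live w = (\<exists>b. (set (evs w) \<subseteq> {b} \<and> b \<notin> set (ods w)) \<or> (set (ods w) \<subseteq> {b} \<and> b \<notin> set (evs w)))"

lemma live_red_aux: "(set (evs w) \<subseteq> {b} \<and> b \<notin> set (ods w)) \<or> (set (ods w) \<subseteq> {b} \<and> b \<notin> set (evs w)) \<Longrightarrow> red w"
proof (induction w rule: red.induct)
  case (1 a c r)
  have "red (c # r)" using 1 by (intro "1.IH") auto
  moreover have "a \<noteq> c" using 1(2) by auto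
  ultimately show ?case by simp
qed auto

lemma live_pm_red: "live r \<Longrightarrow> pm w = pm r \<Longrightarrow> red w"
  unfolding live_def pm_def
  by (metis live_red_aux prod.inject set_mset_mset)

lemma red_tl: "red (x # w) \<Longrightarrow> red w" by (cases w) auto

lemma red_square: "\<not> red (u @ [a,a] @ v)"
  by (induction u) (auto dest: red_tl)

lemma nf_hd: "nf (a # b # r) \<Longrightarrow> a \<noteq> b"
proof (induction r arbitrary: a b)
  case (Cons c r)
  have "b \<noteq> c" using Cons.prems by (intro Cons.IH) simp
  thus ?case using Cons.prems by auto
qed (auto simp: live_def)

lemma altw_Suc2: "altw a b (Suc (Suc n)) = a # b # altw a b n" by simp

lemma altw_sets: "set (evs (altw a b n)) \<subseteq> {a} \<and> set (ods (altw a b n)) \<subseteq> {b}"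
  by (induction n arbitrary: a b) auto

lemma alt_altw: "alt (a # b # r) \<Longrightarrow> a # b # r = altw a b (length r + 2)"
proof (induction r arbitrary: a b)
  case Nil thus ?case by (simp add: numeral_2_eq_2)
next
  case (Cons c r)
  have "b # c # r = altw b c (length r + 2)" using Cons by (intro Cons.IH) simp
  thus ?case using Cons.prems by (simp add: numeral_2_eq_2)
qed

lemma nf_altw: "a \<noteq> b \<Longrightarrow> nf (altw a b n) \<and> alt (altw a b n)"
proof (induction n arbitrary: a b rule: less_induct)
  case (less n)
  show ?case
  proof (cases n)
    case 0 thus ?thesis by simp
  next
    case (Suc m) note m = this
    show ?thesis
    proof (cases m)
      case 0 thus ?thesis using m by simp
    next
      case (Suc j)
      show ?thesis
      proof (cases j)
        case 0 thus ?thesis using m Suc less.prems by simp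
      next
        case (Suc i)
        have "nf (altw b a m) \<and> alt (altw b a m)" using less m less.prems by auto
        thus ?thesis using m \<open>m = Suc j\<close> Suc by simp
      qed
    qed
  qed
qed

lemma nf_live: "nf w \<Longrightarrow> live w"
proof (induction w rule: nf.induct)
  case (2 a)
  have "(if a = X then Y else X) \<noteq> a" by auto
  then show ?case unfolding live_def by (intro exI[of _ "if a = X then Y else X"]) auto
next
  case (3 a b) thus ?case unfolding live_def by (intro exI[of _ b]) auto
next
  case (4 a b c r)
  let ?w = "b # c # r"
  have lw: "live ?w" and nfw: "nf ?w" using 4 by auto
  have hd: "c \<in> set (ods ?w)" by simp
  show ?case
  proof (cases "a = c")
    case True
    from lw obtain \<beta> where "(set (evs ?w) \<subseteq> {\<beta>} \<and> \<beta> \<notin> set (ods ?w)) \<or> (set (ods ?w) \<subseteq> {\<beta>} \<and> \<beta> \<notin> set (evs ?w))"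
      unfolding live_def by blast
    thus ?thesis unfolding live_def using True hd
      by (intro exI[of _ \<beta>]) (auto simp del: evs.simps ods.simps simp: evs.simps(2) ods.simps(2))
  next
    case False
    hence h: "a \<noteq> b" "a \<noteq> c" "alt ?w" using 4 by auto
    have "?w = altw b c (length r + 2)" using h alt_altw by blast
    then have s: "set (evs ?w) \<subseteq> {b}" "set (ods ?w) \<subseteq> {c}" using altw_sets by metis+
    have "b \<noteq> c" using nfw nf_hd by blast
    thus ?thesis unfolding live_def using s h
      by (intro exI[of _ b]) (auto simp del: evs.simps ods.simps simp: evs.simps(2) ods.simps(2))
  qed
qed (auto simp: live_def)

lemma nf_sorted: "nf w \<Longrightarrow> sorted (map rk (evs w)) \<and> sorted (map rk (ods w))"
proof (induction w rule: nf.induct)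
  case (4 a b c r)
  let ?w = "b # c # r"
  have IH: "sorted (map rk (evs ?w)) \<and> sorted (map rk (ods ?w))" using 4 by auto
  have o: "ods ?w = c # ods r" by simp
  have le: "rk a \<le> rk c" using "4.prems" by auto
  have "sorted (map rk (a # ods ?w))" using IH le unfolding o
    by (auto simp: sorted_wrt_map)
  thus ?case using IH by (simp del: evs.simps ods.simps add: evs.simps(2) ods.simps(2))
qed auto

lemma sorted_rk_eq: "sorted (map rk xs) \<Longrightarrow> sorted (map rk ys) \<Longrightarrow> mset xs = mset ys \<Longrightarrow> xs = ys"
proof -
  assume a: "sorted (map rk xs)" "sorted (map rk ys)" "mset xs = mset ys"
  have "mset (map rk xs) = mset (map rk ys)" using a(3) by simp
  hence "map rk xs = map rk ys" using a(1,2) by (metis properties_for_sort)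
  thus ?thesis using rk_inj by (simp add: inj_map_eq_map)
qed

lemma nf_uniq: "nf w \<Longrightarrow> nf w' \<Longrightarrow> pm w = pm w' \<Longrightarrow> w = w'"
  using nf_sorted[of w] nf_sorted[of w'] sorted_rk_eq evs_ods_inj unfolding pm_def by blast



definition B0 :: "complex \<Rightarrow> gen \<Rightarrow> gen \<Rightarrow> gen \<Rightarrow> ncpoly" where
  "B0 t a b c = mono [a,b,c] + nc_scale t (mono [c,b,a])"

definition Bw :: "complex \<Rightarrow> gen list \<Rightarrow> gen \<Rightarrow> gen \<Rightarrow> gen \<Rightarrow> gen list \<Rightarrow> ncpoly" where
  "Bw t u a b c v = mono (u @ [a,b,c] @ v) + nc_scale t (mono (u @ [c,b,a] @ v))"

definition cyc :: "gen \<Rightarrow> gen \<Rightarrow> gen \<Rightarrow> bool" where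
  "cyc a b c \<longleftrightarrow> b = nxt a \<and> c = nxt b"

definition JG :: "complex \<Rightarrow> ncpoly set" where
  "JG t = {mono (u @ [a,a] @ v) | u a v. True} \<union> {Bw t u a b c v | u a b c v. cyc a b c}"

lemma MM_B0: "MM u (B0 t a b c) v = Bw t u a b c v"
  by (simp add: B0_def Bw_def MM_add MM_scale MM_mono)

lemma rel1_dec: "rel1 \<omega> t = B0 t Z X Y + nc_scale \<omega> (B0 t X Y Z) + nc_scale (\<omega>^2) (B0 t Y Z X)"
  by (auto simp: fun_eq_iff poly_of_def rel1_def B0_def mono_def nc_scale_def algebra_simps)

lemma rel2_dec: "rel2 \<omega> t = B0 t Z X Y + nc_scale (\<omega>^2) (B0 t X Y Z) + nc_scale \<omega> (B0 t Y Z X)"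
  by (auto simp: fun_eq_iff poly_of_def rel2_def B0_def mono_def nc_scale_def algebra_simps)

lemma g_dec: "g_rel t = B0 t Z X Y + B0 t X Y Z + B0 t Y Z X"
  by (auto simp: fun_eq_iff poly_of_def g_rel_def B0_def mono_def nc_scale_def algebra_simps)

lemma MM_rel1: "MM u (rel1 \<omega> t) v = Bw t u Z X Y v + nc_scale \<omega> (Bw t u X Y Z v) + nc_scale (\<omega>^2) (Bw t u Y Z X v)"
  by (simp add: rel1_dec MM_add MM_scale MM_B0)
lemma MM_rel2: "MM u (rel2 \<omega> t) v = Bw t u Z X Y v + nc_scale (\<omega>^2) (Bw t u X Y Z v) + nc_scale \<omega> (Bw t u Y Z X v)"
  by (simp add: rel2_dec MM_add MM_scale MM_B0)
lemma MM_g: "MM u (g_rel t) v = Bw t u Z X Y v + Bw t u X Y Z v + Bw t u Y Z X v"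
  by (simp add: g_dec MM_add MM_scale MM_B0)

lemma cyc_cases: "cyc a b c \<longleftrightarrow> (a,b,c) \<in> {(X,Y,Z),(Y,Z,X),(Z,X,Y)}"
  by (cases a; auto simp: cyc_def)

lemma omega_sum: "\<omega>^3 = (1::complex) \<Longrightarrow> \<omega> \<noteq> 1 \<Longrightarrow> 1 + \<omega> + \<omega>^2 = 0"
proof -
  assume a: "\<omega>^3 = 1" "\<omega> \<noteq> 1"
  have "(\<omega> - 1) * (1 + \<omega> + \<omega>^2) = \<omega>^3 - 1" by (simp add: algebra_simps power2_eq_square power3_eq_cube)
  thus ?thesis using a by simp
qed

lemma I_gens: "M_ideal \<omega> t = nc.span {MM u g v | u g v. g \<in> rel_sq \<union> {rel1 \<omega> t, rel2 \<omega> t, g_rel t}}"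
  by (simp add: M_ideal_def two_sided_ideal_def ncspan MM_def)

lemma I_eq:
  assumes w3: "\<omega>^3 = 1" and w1: "\<omega> \<noteq> 1"
  shows "M_ideal \<omega> t = nc.span (JG t)"
proof
  show "M_ideal \<omega> t \<subseteq> nc.span (JG t)"
    unfolding I_gens
  proof (rule nc.span_minimal[OF _ nc.subspace_span], rule subsetI)
    fix x assume "x \<in> {MM u g v | u g v. g \<in> rel_sq \<union> {rel1 \<omega> t, rel2 \<omega> t, g_rel t}}"
    then obtain u g v where xg: "x = MM u g v" and g: "g \<in> rel_sq \<union> {rel1 \<omega> t, rel2 \<omega> t, g_rel t}" by blast
    have B: "Bw t u a b c v \<in> nc.span (JG t)" if "cyc a b c" for a b c
      by (rule nc.span_base) (use that in \<open>unfold JG_def, blast\<close>)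
    have cs: "cyc Z X Y" "cyc X Y Z" "cyc Y Z X" by (simp_all add: cyc_def)
    have sq: "MM u (mono [a,a]) v \<in> nc.span (JG t)" for a
      by (rule nc.span_base) (auto simp: JG_def MM_mono)
    show "x \<in> nc.span (JG t)"
    proof -
      consider "g \<in> rel_sq" | "g = rel1 \<omega> t" | "g = rel2 \<omega> t" | "g = g_rel t" using g by blast
      then show ?thesis
      proof cases
        case 1 thus ?thesis using xg by (auto simp: rel_sq_def sq)
      next
        case 2 thus ?thesis unfolding xg 2 MM_rel1 by (intro nc.span_add nc.span_scale B cs)
      next
        case 3 thus ?thesis unfolding xg 3 MM_rel2 by (intro nc.span_add nc.span_scale B cs)
      next
        case 4 thus ?thesis unfolding xg 4 MM_g by (intro nc.span_add nc.span_scale B cs)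
      qed
    qed
  qed
next
  have S: "nc.span {MM u g v | u g v. g \<in> rel_sq \<union> {rel1 \<omega> t, rel2 \<omega> t, g_rel t}} = M_ideal \<omega> t"
    by (simp add: I_gens)
  have inI: "MM u g v \<in> M_ideal \<omega> t" if "g \<in> rel_sq \<union> {rel1 \<omega> t, rel2 \<omega> t, g_rel t}" for u g v
    unfolding I_gens by (rule nc.span_base) (use that in blast)
  have r1: "MM u (rel1 \<omega> t) v \<in> M_ideal \<omega> t" and r2: "MM u (rel2 \<omega> t) v \<in> M_ideal \<omega> t"
    and rg: "MM u (g_rel t) v \<in> M_ideal \<omega> t" for u v by (auto intro: inI)
  have s: "1 + \<omega> + \<omega>^2 = 0" using omega_sum w3 w1 by blast
  have "\<omega>^4 = \<omega>^3 * \<omega>" by (simp add: eval_nat_numeral)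
  hence w4: "\<omega>^4 = \<omega>" using w3 by simp
  have e1: "Bw t u Z X Y v = nc_scale (1/3) (MM u (rel1 \<omega> t) v + MM u (rel2 \<omega> t) v + MM u (g_rel t) v)" for u v
  proof -
    have "\<And>b c d. b = (1/3) * ((b + \<omega> * c + \<omega>^2 * d) + (b + \<omega>^2 * c + \<omega> * d) + (b + c + d))"
    proof -
      fix b c d :: complex
      have "(b + \<omega> * c + \<omega>^2 * d) + (b + \<omega>^2 * c + \<omega> * d) + (b + c + d) = 3 * b + (1 + \<omega> + \<omega>^2) * (c + d)"
        by (simp add: algebra_simps)
      thus "b = (1/3) * ((b + \<omega> * c + \<omega>^2 * d) + (b + \<omega>^2 * c + \<omega> * d) + (b + c + d))" using s by simp
    qed
    thus ?thesis unfolding MM_rel1 MM_rel2 MM_g by (simp add: fun_eq_iff nc_scale_def)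
  qed
  have e2: "Bw t u X Y Z v = nc_scale (1/3) (nc_scale (\<omega>^2) (MM u (rel1 \<omega> t) v) + nc_scale \<omega> (MM u (rel2 \<omega> t) v) + MM u (g_rel t) v)" for u v
  proof -
    have "\<And>b c d. c = (1/3) * (\<omega>^2 * (b + \<omega> * c + \<omega>^2 * d) + \<omega> * (b + \<omega>^2 * c + \<omega> * d) + (b + c + d))"
    proof -
      fix b c d :: complex
      have "\<omega>^2 * (b + \<omega> * c + \<omega>^2 * d) + \<omega> * (b + \<omega>^2 * c + \<omega> * d) + (b + c + d) = (1 + \<omega> + \<omega>^2) * b + (2 * \<omega>^3 + 1) * c + (\<omega>^4 + \<omega>^2 + 1) * d"
        by (simp add: algebra_simps power2_eq_square power3_eq_cube power4_eq_xxxx)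
      also have "\<dots> = 3 * c" using s w3 w4 by (simp add: algebra_simps)
      finally show "c = (1/3) * (\<omega>^2 * (b + \<omega> * c + \<omega>^2 * d) + \<omega> * (b + \<omega>^2 * c + \<omega> * d) + (b + c + d))" by simp
    qed
    thus ?thesis unfolding MM_rel1 MM_rel2 MM_g by (simp add: fun_eq_iff nc_scale_def)
  qed
  have e3: "Bw t u Y Z X v = nc_scale (1/3) (nc_scale \<omega> (MM u (rel1 \<omega> t) v) + nc_scale (\<omega>^2) (MM u (rel2 \<omega> t) v) + MM u (g_rel t) v)" for u v
  proof -
    have "\<And>b c d. d = (1/3) * (\<omega> * (b + \<omega> * c + \<omega>^2 * d) + \<omega>^2 * (b + \<omega>^2 * c + \<omega> * d) + (b + c + d))"
    proof -
      fix b c d :: complex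
      have "\<omega> * (b + \<omega> * c + \<omega>^2 * d) + \<omega>^2 * (b + \<omega>^2 * c + \<omega> * d) + (b + c + d) = (1 + \<omega> + \<omega>^2) * b + (\<omega>^4 + \<omega>^2 + 1) * c + (2 * \<omega>^3 + 1) * d"
        by (simp add: algebra_simps power2_eq_square power3_eq_cube power4_eq_xxxx)
      also have "\<dots> = 3 * d" using s w3 w4 by (simp add: algebra_simps)
      finally show "d = (1/3) * (\<omega> * (b + \<omega> * c + \<omega>^2 * d) + \<omega>^2 * (b + \<omega>^2 * c + \<omega> * d) + (b + c + d))" by simp
    qed
    thus ?thesis unfolding MM_rel1 MM_rel2 MM_g by (simp add: fun_eq_iff nc_scale_def)
  qed
  have sub: "nc.subspace (M_ideal \<omega> t)" unfolding I_gens by (rule nc.subspace_span)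
  show "nc.span (JG t) \<subseteq> M_ideal \<omega> t"
  proof (rule nc.span_minimal[OF _ sub])
    show "JG t \<subseteq> M_ideal \<omega> t"
    proof
      fix x assume "x \<in> JG t"
      then consider (sq) u a v where "x = mono (u @ [a,a] @ v)" | (b) u a b c v where "x = Bw t u a b c v" "cyc a b c"
        unfolding JG_def by blast
      then show "x \<in> M_ideal \<omega> t"
      proof cases
        case sq
        have "MM u (mono [a,a]) v \<in> M_ideal \<omega> t"
          by (rule inI) (cases a; simp add: rel_sq_def)
        thus ?thesis using sq by (simp add: MM_mono)
      next
        case b
        from b(2) have "(a,b,c) \<in> {(X,Y,Z),(Y,Z,X),(Z,X,Y)}" by (simp add: cyc_cases)
        have cla: "p + q \<in> M_ideal \<omega> t" if "p \<in> M_ideal \<omega> t" "q \<in> M_ideal \<omega> t" for p q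
          using sub that by (simp add: nc.subspace_add)
        have cls: "nc_scale c p \<in> M_ideal \<omega> t" if "p \<in> M_ideal \<omega> t" for c p
          using sub that by (simp add: nc.subspace_scale)
        show ?thesis using b(1) e1 e2 e3 r1 r2 rg \<open>(a,b,c) \<in> _\<close>
          by (auto intro!: cla cls)
      qed
    qed
  qed
qed



lemma UNIV_gen: "(UNIV :: gen set) = {X, Y, Z}"
  by (auto, case_tac x, auto)

definition Wk :: "nat \<Rightarrow> gen list set" where "Wk k = {w. length w = k}"

lemma finite_Wk: "finite (Wk k)"
proof -
  have "Wk k = {xs. set xs \<subseteq> UNIV \<and> length xs = k}" by (simp add: Wk_def)
  moreover have "finite (UNIV :: gen set)" by (simp add: UNIV_gen)
  ultimately show ?thesis using finite_lists_length_eq by metis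
qed

definition cw :: "complex \<Rightarrow> gen list \<Rightarrow> gen list \<Rightarrow> complex" where
  "cw t r w = (if pm w = pm r then (- 1 / t) ^ F w else 0)"

definition phi :: "complex \<Rightarrow> gen list \<Rightarrow> ncpoly \<Rightarrow> complex" where
  "phi t r p = (\<Sum>w\<in>Wk (length r). cw t r w * p w)"

lemma phi_mono: "phi t r (mono m) = (if length m = length r then cw t r m else 0)"
proof -
  have "phi t r (mono m) = (\<Sum>w\<in>Wk (length r). if w = m then cw t r w else 0)"
    unfolding phi_def by (rule sum.cong) (auto simp: mono_def)
  also have "\<dots> = (if length m = length r then cw t r m else 0)"
    using finite_Wk by (simp add: Wk_def)
  finally show ?thesis .
qed

lemma phi_add: "phi t r (p + q) = phi t r p + phi t r q"
  by (simp add: phi_def algebra_simps sum.distrib)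
lemma phi_add': "phi t r (\<lambda>a. p a + q a) = phi t r p + phi t r q"
  by (simp add: phi_def algebra_simps sum.distrib)
lemma phi_scale: "phi t r (nc_scale c p) = c * phi t r p"
  by (simp add: phi_def nc_scale_def sum_distrib_left algebra_simps)
lemma phi_zero: "phi t r 0 = 0"
  by (simp add: phi_def)
lemma phi_zero': "phi t r (\<lambda>_. 0) = 0"
  by (simp add: phi_def)

lemma phi_JG:
  assumes t: "t \<noteq> 0" and lv: "live r" and x: "x \<in> JG t"
  shows "phi t r x = 0"
proof -
  from x consider (sq) u a v where "x = mono (u @ [a,a] @ v)" | (b) u a b c v where "x = Bw t u a b c v" "cyc a b c"
    unfolding JG_def by blast
  then show ?thesis
  proof cases
    case sq
    have "pm (u @ [a,a] @ v) \<noteq> pm r" using live_pm_red[OF lv] red_square by blast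
    thus ?thesis using sq by (simp add: phi_mono cw_def)
  next
    case b
    let ?w1 = "u @ [a,b,c] @ v" and ?w2 = "u @ [c,b,a] @ v"
    have pm: "pm ?w2 = pm ?w1" using pm_move by metis
    have Fm: "F ?w2 = Suc (F ?w1)" using F_move b(2) unfolding cyc_def by blast
    have "cw t r ?w1 + t * cw t r ?w2 = 0"
    proof (cases "pm ?w1 = pm r")
      case True
      have "(- 1 / t) ^ F ?w1 + t * (- 1 / t) ^ Suc (F ?w1) = (- 1 / t) ^ F ?w1 * (1 + t * (- 1 / t))"
        by (simp add: algebra_simps)
      also have "\<dots> = 0" using t by simp
      finally show ?thesis using True pm Fm by (simp add: cw_def)
    qed (use pm in \<open>simp add: cw_def\<close>)
    thus ?thesis using b(1) by (simp add: Bw_def phi_add phi_scale phi_mono)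
  qed
qed

lemma phi_J:
  assumes t: "t \<noteq> 0" and lv: "live r" and x: "x \<in> nc.span (JG t)"
  shows "phi t r x = 0"
  using x
proof (induction rule: nc.span_induct_alt)
  case base thus ?case by (simp add: phi_zero phi_zero')
next
  case (step c x y) thus ?case using phi_JG[OF t lv] by (simp add: phi_add phi_add' phi_scale)
qed

lemma phi_self: "t \<noteq> 0 \<Longrightarrow> phi t r (mono r) \<noteq> 0"
  by (simp add: phi_mono cw_def)

lemma phi_other: "nf r \<Longrightarrow> nf r' \<Longrightarrow> r' \<noteq> r \<Longrightarrow> phi t r (mono r') = 0"
  using nf_uniq by (simp add: phi_mono cw_def) blast



definition LL :: "gen \<Rightarrow> ncpoly \<Rightarrow> ncpoly" where
  "LL l p = (\<lambda>w. case w of [] \<Rightarrow> 0 | a # w' \<Rightarrow> if a = l then p w' else 0)"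

lemma LL_mono: "LL l (mono m) = mono (l # m)"
  by (auto simp: LL_def mono_def fun_eq_iff split: list.split)
lemma LL_add: "LL l (p + q) = LL l p + LL l q"
  by (auto simp: LL_def fun_eq_iff split: list.split)
lemma LL_add': "LL l (\<lambda>a. p a + q a) = LL l p + LL l q"
  by (auto simp: LL_def fun_eq_iff split: list.split)
lemma LL_scale: "LL l (nc_scale c p) = nc_scale c (LL l p)"
  by (auto simp: LL_def fun_eq_iff nc_scale_def split: list.split)
lemma LL_diff: "LL l (p - q) = LL l p - LL l q"
  by (auto simp: LL_def fun_eq_iff split: list.split)
lemma LL_Bw: "LL l (Bw t u a b c v) = Bw t (l # u) a b c v"
  by (simp add: Bw_def LL_add LL_scale LL_mono)

lemma LL_JG: "x \<in> JG t \<Longrightarrow> LL l x \<in> JG t"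
  unfolding JG_def by (auto simp: LL_mono LL_Bw) (metis append_Cons)+

lemma LL_J: "x \<in> nc.span (JG t) \<Longrightarrow> LL l x \<in> nc.span (JG t)"
proof (induction rule: nc.span_induct_alt)
  case base
  have "LL l (\<lambda>_. 0) = (\<lambda>_. 0)" by (auto simp: LL_def fun_eq_iff split: list.split)
  thus ?case using nc.span_zero[of "JG t"] by (simp add: zero_fun_def)
next
  case (step c x y)
  have "LL l x \<in> nc.span (JG t)" using step LL_JG nc.span_base by blast
  hence "nc_scale c (LL l x) + LL l y \<in> nc.span (JG t)" using step by (intro nc.span_add nc.span_scale)
  thus ?case by (simp add: LL_add' LL_scale plus_fun_def)
qed

definition RJ :: "complex \<Rightarrow> gen list \<Rightarrow> gen list \<Rightarrow> bool" where
  "RJ t x y \<longleftrightarrow> (\<exists>\<sigma>. mono x - nc_scale \<sigma> (mono y) \<in> nc.span (JG t))"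

lemma RJ_refl: "RJ t x x"
proof -
  have "mono x - nc_scale 1 (mono x) = 0" by (simp add: nc_scale_def)
  thus ?thesis unfolding RJ_def by (metis nc.span_zero)
qed

lemma RJ_trans: "RJ t x y \<Longrightarrow> RJ t y z \<Longrightarrow> RJ t x z"
proof -
  assume "RJ t x y" "RJ t y z"
  then obtain s1 s2 where h1: "mono x - nc_scale s1 (mono y) \<in> nc.span (JG t)"
    and h2: "mono y - nc_scale s2 (mono z) \<in> nc.span (JG t)" unfolding RJ_def by blast
  have "mono x - nc_scale (s1 * s2) (mono z) = (mono x - nc_scale s1 (mono y)) + nc_scale s1 (mono y - nc_scale s2 (mono z))"
    by (simp add: nc_scale_def fun_eq_iff algebra_simps)
  also have "\<dots> \<in> nc.span (JG t)" using h1 h2 by (intro nc.span_add nc.span_scale)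
  finally show ?thesis unfolding RJ_def by blast
qed

lemma RJ_zero: "RJ t x y \<Longrightarrow> mono y \<in> nc.span (JG t) \<Longrightarrow> mono x \<in> nc.span (JG t)"
proof -
  assume "RJ t x y" and y: "mono y \<in> nc.span (JG t)"
  then obtain s where h: "mono x - nc_scale s (mono y) \<in> nc.span (JG t)" unfolding RJ_def by blast
  have "mono x = (mono x - nc_scale s (mono y)) + nc_scale s (mono y)" by simp
  thus ?thesis using h y by (metis nc.span_add nc.span_scale)
qed

lemma RJ_LL: "RJ t x y \<Longrightarrow> RJ t (l # x) (l # y)"
proof -
  assume "RJ t x y"
  then obtain s where h: "mono x - nc_scale s (mono y) \<in> nc.span (JG t)" unfolding RJ_def by blast
  have "LL l (mono x - nc_scale s (mono y)) = mono (l # x) - nc_scale s (mono (l # y))"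
    by (simp add: LL_diff LL_scale LL_mono)
  thus ?thesis using LL_J[OF h] unfolding RJ_def by metis
qed

lemma sq_J: "mono (u @ [a,a] @ v) \<in> nc.span (JG t)"
  by (rule nc.span_base) (auto simp: JG_def)

lemma distinct_cyc: "a \<noteq> b \<Longrightarrow> b \<noteq> c \<Longrightarrow> a \<noteq> c \<Longrightarrow> cyc c a b \<or> cyc b a c"
  by (cases a; cases b; cases c; simp add: cyc_def)

lemma RJ_move:
  assumes t: "t \<noteq> 0" and d: "a \<noteq> b" "b \<noteq> c" "a \<noteq> c"
  shows "RJ t (u @ [c,a,b] @ v) (u @ [b,a,c] @ v)"
proof (cases "cyc c a b")
  case True
  have "Bw t u c a b v \<in> nc.span (JG t)" using True by (intro nc.span_base) (unfold JG_def, blast)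
  moreover have "Bw t u c a b v = mono (u @ [c,a,b] @ v) - nc_scale (- t) (mono (u @ [b,a,c] @ v))"
    by (simp add: Bw_def nc_scale_def fun_eq_iff)
  ultimately show ?thesis unfolding RJ_def by metis
next
  case False
  hence "cyc b a c" using distinct_cyc d by blast
  hence "Bw t u b a c v \<in> nc.span (JG t)" by (intro nc.span_base) (unfold JG_def, blast)
  hence "nc_scale (1/t) (Bw t u b a c v) \<in> nc.span (JG t)" by (rule nc.span_scale)
  moreover have "nc_scale (1/t) (Bw t u b a c v) = mono (u @ [c,a,b] @ v) - nc_scale (- 1/t) (mono (u @ [b,a,c] @ v))"
    using t by (simp add: Bw_def nc_scale_def fun_eq_iff algebra_simps)
  ultimately show ?thesis unfolding RJ_def by metis
qed

lemma bubble:
  assumes t: "t \<noteq> 0" and d: "a \<noteq> b" "b \<noteq> c" "a \<noteq> c"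
  shows "RJ t (u @ c # altw a b (2*n) @ rest) (u @ altw b a (2*n) @ c # rest)"
proof (induction n arbitrary: u)
  case 0 thus ?case by (simp add: RJ_refl)
next
  case (Suc n)
  have e1: "u @ c # altw a b (2 * Suc n) @ rest = u @ [c,a,b] @ (altw a b (2*n) @ rest)" by simp
  have e2: "u @ [b,a,c] @ (altw a b (2*n) @ rest) = (u @ [b,a]) @ c # altw a b (2*n) @ rest" by simp
  have e3: "u @ altw b a (2 * Suc n) @ c # rest = (u @ [b,a]) @ altw b a (2*n) @ c # rest" by simp
  show ?case unfolding e1 e3
    using RJ_trans[OF RJ_move[OF t d, of u "altw a b (2*n) @ rest"] Suc.IH[of "u @ [b,a]", folded e2]] .
qed

lemma third: "(l::gen) \<noteq> a \<Longrightarrow> l \<noteq> b \<Longrightarrow> c \<noteq> a \<Longrightarrow> c \<noteq> b \<Longrightarrow> a \<noteq> b \<Longrightarrow> l = c"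
  by (cases l; cases a; cases b; cases c; simp)

lemma nf_cons: "nf (l # r) \<Longrightarrow> nf r"
  by (cases r rule: nf.cases) auto

lemma structure_dev:
  "nf (a # b # r) \<Longrightarrow> \<not> alt (a # b # r) \<Longrightarrow> \<exists>c j n. c \<noteq> a \<and> c \<noteq> b \<and> j \<ge> 1 \<and> n \<ge> 1 \<and>
     ((a # b # r = altw a b (2*j) @ altw c b n \<and> rk a < rk c) \<or>
      (a # b # r = altw a b (2*j+1) @ altw c a n \<and> rk b < rk c))"
proof (induction r arbitrary: a b)
  case Nil thus ?case by simp
next
  case (Cons x r)
  show ?case
  proof (cases "a = x")
    case False
    hence h: "a \<noteq> b" "alt (b # x # r)" "rk a < rk x" using Cons.prems by auto
    have bx: "b \<noteq> x" using Cons.prems nf_cons nf_hd by blast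
    have "b # x # r = altw b x (length r + 2)" using h alt_altw by blast
    hence "a # b # x # r = altw a b 2 @ altw x b (Suc (length r))" by (simp add: numeral_2_eq_2)
    thus ?thesis using h False bx by (intro exI[of _ x] exI[of _ 1] exI[of _ "Suc (length r)"]) auto
  next
    case True
    have nf2: "nf (b # a # r)" using Cons.prems True nf_cons by blast
    have na: "\<not> alt (b # a # r)" using Cons.prems True by simp
    have ab: "a \<noteq> b" using Cons.prems nf_hd by blast
    obtain c j n where c: "c \<noteq> b" "c \<noteq> a" "j \<ge> 1" "n \<ge> 1" and
      cs: "(b # a # r = altw b a (2*j) @ altw c a n \<and> rk b < rk c) \<or>
      (b # a # r = altw b a (2*j+1) @ altw c b n \<and> rk a < rk c)"
      using Cons.IH[OF nf2 na] by blast
    from cs show ?thesis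
    proof
      assume h: "b # a # r = altw b a (2*j) @ altw c a n \<and> rk b < rk c"
      hence "a # b # a # r = altw a b (2*j+1) @ altw c a n" by simp
      thus ?thesis using h c True by (intro exI[of _ c] exI[of _ j] exI[of _ n]) auto
    next
      assume h: "b # a # r = altw b a (2*j+1) @ altw c b n \<and> rk a < rk c"
      hence "a # b # a # r = altw a b (2*(j+1)) @ altw c b n" by simp
      thus ?thesis using h c True by (intro exI[of _ c] exI[of _ "j+1"] exI[of _ n]) auto
    qed
  qed
qed

lemma nf_prepend_cont: "nf (b # a # w) \<Longrightarrow> nf (a # b # a # w)"
  by simp

lemma target_nf:
  assumes d: "a \<noteq> b" "b \<noteq> c" "a \<noteq> c" and r: "rk b < rk c" and n: "n \<ge> 1"
  shows "nf (altw b a (2*n) @ c # altw a c e)"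
  using n
proof (induction n rule: dec_induct)
  case base
  have "nf (altw a c (Suc (Suc e))) \<and> alt (altw a c (Suc (Suc e)))" using nf_altw d by blast
  hence "nf (a # c # altw a c e) \<and> alt (a # c # altw a c e)" by simp
  moreover have "altw b a (2*1) @ c # altw a c e = b # a # c # altw a c e" by (simp add: numeral_2_eq_2)
  ultimately show ?case using d r by simp
next
  case (step m)
  obtain w where w: "altw b a (2*m) @ c # altw a c e = b # a # w" using step(1)
    by (cases m) auto
  have "altw b a (2 * Suc m) @ c # altw a c e = b # a # b # a # w" using w by simp
  moreover have "nf (b # a # w)" using step w by simp
  ultimately show ?case by simp
qed

lemma length_altw[simp]: "length (altw a b n) = n"
  by (induction n arbitrary: a b) auto

lemma altw_add: "altw a b (m + n) = altw a b m @ (if even m then altw a b n else altw b a n)"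
  by (induction m arbitrary: a b) auto

lemma extend:
  assumes t: "t \<noteq> 0" and nfr: "nf r"
  shows "(\<exists>r'. nf r' \<and> length r' = Suc (length r) \<and> RJ t (l # r) r') \<or> mono (l # r) \<in> nc.span (JG t)"
proof (cases r)
  case Nil thus ?thesis by (intro disjI1 exI[of _ "[l]"]) (simp add: RJ_refl)
next
  case (Cons a r1)
  show ?thesis
  proof (cases r1)
    case Nil
    show ?thesis
    proof (cases "l = a")
      case True thus ?thesis using Cons Nil sq_J[of "[]" a "[]" t] by simp
    next
      case False thus ?thesis using Cons Nil by (intro disjI1 exI[of _ "[l, a]"]) (simp add: RJ_refl)
    qed
  next
    case (Cons b r2) note r1 = this
    have rr: "r = a # b # r2" using Cons \<open>r = a # r1\<close> by simp
    have ab: "a \<noteq> b" using nfr rr nf_hd by blast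
    show ?thesis
    proof (cases "l = a")
      case True thus ?thesis using rr sq_J[of "[]" a "b # r2" t] by simp
    next
      case la: False
      show ?thesis
      proof (cases "l = b")
        case True
        have "nf (l # r)" using True rr nfr by simp
        thus ?thesis by (intro disjI1 exI[of _ "l # r"]) (simp add: RJ_refl)
      next
        case lb: False
        show ?thesis
        proof (cases "alt r")
          case True
          show ?thesis
          proof (cases "rk l < rk b")
            case True
            have "nf (l # r)" using True \<open>alt r\<close> rr nfr la lb by simp
            thus ?thesis by (intro disjI1 exI[of _ "l # r"]) (simp add: RJ_refl)
          next
            case False
            hence rbl: "rk b < rk l" using lb by (metis linorder_neqE_nat rk_eq)
            have ralt: "r = altw a b (length r2 + 2)" using \<open>alt r\<close> rr alt_altw by blast
            define n where "n = (length r2 + 2) div 2"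
            define e where "e = (length r2 + 2) mod 2"
            have ne: "length r2 + 2 = 2 * n + e" "e \<le> 1" "n \<ge> 1" unfolding n_def e_def by auto
            have ae: "altw a b e = altw a l e"
            proof (cases e)
              case (Suc e') hence "e' = 0" using ne(2) by simp
              thus ?thesis using Suc by simp
            qed simp
            have "r = altw a b (2*n + e)" using ralt ne(1) by metis
            hence "r = altw a b (2*n) @ altw a b e" by (simp only: altw_add) simp
            hence rw: "l # r = [] @ l # altw a b (2*n) @ altw a l e" using ae by simp
            have "RJ t (l # r) ([] @ altw b a (2*n) @ l # altw a l e)"
              unfolding rw by (rule bubble[OF t ab]) (use la lb in auto)
            moreover have "nf (altw b a (2*n) @ l # altw a l e)"
              by (rule target_nf) (use ab la lb rbl ne in auto)
            moreover have "length (altw b a (2*n) @ l # altw a l e) = Suc (length r)"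
              using ralt ne by simp
            ultimately show ?thesis by auto
          qed
        next
          case False
          then obtain c j n where c: "c \<noteq> a" "c \<noteq> b" "j \<ge> 1" "n \<ge> 1" and
            cs: "(r = altw a b (2*j) @ altw c b n \<and> rk a < rk c) \<or>
                 (r = altw a b (2*j+1) @ altw c a n \<and> rk b < rk c)"
            using structure_dev[of a b r2] nfr rr by auto
          have lc: "l = c" using third la lb c ab by blast
          from cs show ?thesis
          proof
            assume h: "r = altw a b (2*j) @ altw c b n \<and> rk a < rk c"
            obtain n' where n': "n = Suc n'" using c by (cases n) auto
            have "l # r = [] @ c # altw a b (2*j) @ c # altw b c n'" using h lc n' by simp
            hence "RJ t (l # r) ([] @ altw b a (2*j) @ c # c # altw b c n')"
              using bubble[OF t ab, of c "[]" j "c # altw b c n'"] c by auto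
            moreover have "mono (altw b a (2*j) @ c # c # altw b c n') \<in> nc.span (JG t)"
              using sq_J[of "altw b a (2*j)" c "altw b c n'" t] by simp
            ultimately show ?thesis using RJ_zero by auto
          next
            assume h: "r = altw a b (2*j+1) @ altw c a n \<and> rk b < rk c"
            have "altw a b (2*j+1) = altw a b (2*j) @ [a]" by (simp only: altw_add) simp
            hence "l # r = [] @ c # altw a b (2*j) @ altw a c (Suc n)" using h lc by simp
            hence "RJ t (l # r) ([] @ altw b a (2*j) @ c # altw a c (Suc n))"
              using bubble[OF t ab, of c "[]" j "altw a c (Suc n)"] c by auto
            moreover have "nf (altw b a (2*j) @ c # altw a c (Suc n))"
              by (rule target_nf) (use ab c h in auto)
            moreover have "length (altw b a (2*j) @ c # altw a c (Suc n)) = Suc (length r)"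
              using h by (simp add: length_altw)
            ultimately show ?thesis by auto
          qed
        qed
      qed
    qed
  qed
qed



lemma reduce:
  assumes t: "t \<noteq> 0"
  shows "(\<exists>r. nf r \<and> length r = length w \<and> RJ t w r) \<or> mono w \<in> nc.span (JG t)"
proof (induction w)
  case Nil thus ?case by (intro disjI1 exI[of _ "[]"]) (simp add: RJ_refl)
next
  case (Cons l w)
  from Cons.IH show ?case
  proof
    assume "\<exists>r. nf r \<and> length r = length w \<and> RJ t w r"
    then obtain r where r: "nf r" "length r = length w" "RJ t w r" by blast
    have lr: "RJ t (l # w) (l # r)" using RJ_LL r(3) by blast
    from extend[OF t r(1), of l] show ?thesis
    proof
      assume "\<exists>r'. nf r' \<and> length r' = Suc (length r) \<and> RJ t (l # r) r'"
      then obtain r' where "nf r'" "length r' = Suc (length r)" "RJ t (l # r) r'" by blast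
      thus ?thesis using RJ_trans[OF lr] r(2) by auto
    next
      assume "mono (l # r) \<in> nc.span (JG t)"
      thus ?thesis using RJ_zero[OF lr] by blast
    qed
  next
    assume "mono w \<in> nc.span (JG t)"
    thus ?thesis using LL_J[of "mono w" t l] by (simp add: LL_mono)
  qed
qed

definition NN :: "nat \<Rightarrow> gen list set" where "NN k = {w. length w = k \<and> nf w}"

lemma finite_NN: "finite (NN k)"
  using finite_Wk[of k] by (rule finite_subset[rotated]) (auto simp: NN_def Wk_def)

lemma mono_in_span:
  assumes t: "t \<noteq> 0" and w: "length w = k"
  shows "mono w \<in> nc.span (nc.span (JG t) \<union> mono ` NN k)"
proof -
  from reduce[OF t, of w] show ?thesis
  proof
    assume "\<exists>r. nf r \<and> length r = length w \<and> RJ t w r"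
    then obtain r s where r: "nf r" "length r = length w" and s: "mono w - nc_scale s (mono r) \<in> nc.span (JG t)"
      unfolding RJ_def by blast
    have "mono r \<in> nc.span (nc.span (JG t) \<union> mono ` NN k)"
      using r w by (intro nc.span_base) (auto simp: NN_def)
    moreover have "mono w - nc_scale s (mono r) \<in> nc.span (nc.span (JG t) \<union> mono ` NN k)"
      using s by (intro nc.span_base) auto
    moreover have "mono w = (mono w - nc_scale s (mono r)) + nc_scale s (mono r)" by simp
    ultimately show ?thesis by (metis nc.span_add nc.span_scale)
  next
    assume "mono w \<in> nc.span (JG t)"
    thus ?thesis by (intro nc.span_base) auto
  qed
qed

lemma fun_sum_apply: "finite A \<Longrightarrow> (\<Sum>a\<in>A. f a) x = (\<Sum>a\<in>A. f a x)"
  by (induction A rule: finite_induct) auto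

lemma homog_expand:
  assumes "p \<in> homog k"
  shows "p = (\<Sum>w\<in>Wk k. nc_scale (p w) (mono w))"
proof (rule ext)
  fix x
  have "(\<Sum>w\<in>Wk k. nc_scale (p w) (mono w)) x = (\<Sum>w\<in>Wk k. p w * mono w x)"
    by (simp add: fun_sum_apply finite_Wk nc_scale_def)
  also have "\<dots> = (\<Sum>w\<in>Wk k. if w = x then p x else 0)"
    by (rule sum.cong) (auto simp: mono_def)
  also have "\<dots> = p x" using assms finite_Wk[of k] by (auto simp: Wk_def homog_def)
  finally show "p x = (\<Sum>w\<in>Wk k. nc_scale (p w) (mono w)) x" by simp
qed

lemma homog_span: "homog k \<subseteq> nc.span (mono ` Wk k)"
proof
  fix p assume p: "p \<in> homog k"
  have "(\<Sum>w\<in>Wk k. nc_scale (p w) (mono w)) \<in> nc.span (mono ` Wk k)"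
    by (intro nc.span_sum nc.span_scale nc.span_base) auto
  thus "p \<in> nc.span (mono ` Wk k)" using homog_expand[OF p] by simp
qed

lemma homog_subspace: "nc.subspace (homog k)"
  unfolding nc.subspace_def by (auto simp: homog_def nc_scale_def)

lemma mono_homog: "length w = k \<Longrightarrow> mono w \<in> homog k"
  by (auto simp: homog_def mono_def)

lemma homog_in_span:
  assumes t: "t \<noteq> 0"
  shows "homog k \<subseteq> nc.span (nc.span (JG t) \<union> mono ` NN k)"
proof -
  have "mono ` Wk k \<subseteq> nc.span (nc.span (JG t) \<union> mono ` NN k)"
    using mono_in_span[OF t] by (auto simp: Wk_def)
  hence "nc.span (mono ` Wk k) \<subseteq> nc.span (nc.span (JG t) \<union> mono ` NN k)"
    by (metis nc.span_minimal nc.subspace_span)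
  thus ?thesis using homog_span by blast
qed

lemma mono_inj: "inj mono"
  by (rule injI) (metis mono_def zero_neq_one)

lemma dim_main:
  fixes H J :: "ncpoly set" and N W :: "gen list set" and \<Phi> :: "gen list \<Rightarrow> ncpoly \<Rightarrow> complex"
  assumes sH: "nc.subspace H" and sJ: "nc.subspace J" and fN: "finite N" and fW: "finite W"
    and NH: "mono ` N \<subseteq> H" and HW: "H \<subseteq> nc.span (mono ` W)" and HS: "H \<subseteq> nc.span (J \<union> mono ` N)"
    and ladd: "\<And>r p q. \<Phi> r (p + q) = \<Phi> r p + \<Phi> r q"
    and lsc: "\<And>r c p. \<Phi> r (nc_scale c p) = c * \<Phi> r p"
    and vJ: "\<And>r x. r \<in> N \<Longrightarrow> x \<in> J \<Longrightarrow> \<Phi> r x = 0"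
    and vself: "\<And>r. r \<in> N \<Longrightarrow> \<Phi> r (mono r) \<noteq> 0"
    and voth: "\<And>r r'. r \<in> N \<Longrightarrow> r' \<in> N \<Longrightarrow> r' \<noteq> r \<Longrightarrow> \<Phi> r (mono r') = 0"
  shows "nc.dim H = nc.dim (J \<inter> H) + card N"
proof -
  obtain B where B: "B \<subseteq> J \<inter> H" "nc.independent B" "J \<inter> H \<subseteq> nc.span B" "card B = nc.dim (J \<inter> H)"
    using nc.basis_exists by blast
  have finB: "finite B"
    using nc.independent_span_bound[of "mono ` W" B] fW B(1,2) HW by auto
  have z: "\<Phi> r 0 = 0" for r
  proof -
    have "\<Phi> r (nc_scale 0 0) = 0 * \<Phi> r 0" by (rule lsc)
    moreover have "nc_scale 0 (0::ncpoly) = 0" by (simp add: nc_scale_def fun_eq_iff)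
    ultimately show ?thesis by simp
  qed
  have van: "\<Phi> r x = 0" if r: "r \<in> N" and S: "S \<subseteq> N - {r}" and x: "x \<in> nc.span (B \<union> mono ` S)" for r S x
    using x
  proof (induction rule: nc.span_induct_alt)
    case base thus ?case using z by (simp add: zero_fun_def)
  next
    case (step c x y)
    have "\<Phi> r x = 0"
    proof (cases "x \<in> B")
      case True thus ?thesis using B(1) vJ r by blast
    next
      case False
      then obtain r' where "x = mono r'" "r' \<in> S" using step(1) by blast
      thus ?thesis using voth r S by blast
    qed
    thus ?case using step(2) by (subst ladd, subst lsc) simp
  qed
  have ind: "S \<subseteq> N \<Longrightarrow> nc.independent (B \<union> mono ` S)" for S
  proof -
    assume SN: "S \<subseteq> N"
    have "finite S" using SN fN finite_subset by blast
    thus ?thesis using SN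
    proof (induction S rule: finite_induct)
      case empty thus ?case using B(2) by simp
    next
      case (insert r S)
      have "mono r \<notin> nc.span (B \<union> mono ` S)"
      proof
        assume "mono r \<in> nc.span (B \<union> mono ` S)"
        hence "\<Phi> r (mono r) = 0" using van[of r S] insert by blast
        thus False using vself insert by blast
      qed
      hence "nc.independent (insert (mono r) (B \<union> mono ` S))"
        using insert by (intro nc.independent_insertI) auto
      thus ?case by (simp add: insert_commute)
    qed
  qed
  let ?BB = "B \<union> mono ` N"
  have indBB: "nc.independent ?BB" using ind by blast
  have subBB: "?BB \<subseteq> H" using B(1) NH by blast
  have spanBB: "H \<subseteq> nc.span ?BB"
  proof
    fix p assume p: "p \<in> H"
    then obtain x y where xy: "p = x + y" "x \<in> nc.span J" "y \<in> nc.span (mono ` N)"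
      using HS nc.span_Un by blast
    have xJ: "x \<in> J" using xy(2) sJ nc.span_eq_iff by blast
    have yH: "y \<in> H" using xy(3) NH sH nc.span_minimal by blast
    have "x = p - y" using xy by simp
    hence xH: "x \<in> H" using p yH sH nc.subspace_diff by metis
    have "x \<in> nc.span ?BB" using xJ xH B(3) nc.span_mono[of B ?BB] by blast
    moreover have "y \<in> nc.span ?BB" using xy(3) nc.span_mono[of "mono ` N" ?BB] by blast
    ultimately show "p \<in> nc.span ?BB" using xy(1) nc.span_add by blast
  qed
  have dH: "card ?BB = nc.dim H" using nc.basis_card_eq_dim[OF subBB spanBB indBB] .
  have disj: "B \<inter> mono ` N = {}"
  proof (rule ccontr)
    assume "B \<inter> mono ` N \<noteq> {}"
    then obtain r where "r \<in> N" "mono r \<in> B" by blast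
    thus False using vJ vself B(1) by blast
  qed
  have "card ?BB = card B + card (mono ` N)"
    using finB fN disj by (simp add: card_Un_disjoint)
  moreover have "card (mono ` N) = card N"
    using mono_inj by (simp add: card_image inj_on_def inj_def)
  ultimately show ?thesis using dH B(4) by simp
qed



lemma NN0: "NN 0 = {[]}" by (auto simp: NN_def)
lemma NN1: "NN 1 = {[X],[Y],[Z]}"
proof -
  have "w \<in> NN 1 \<longleftrightarrow> w \<in> {[X],[Y],[Z]}" for w
  proof
    assume "w \<in> NN 1"
    then obtain a where "w = [a]" by (auto simp: NN_def length_Suc_conv)
    thus "w \<in> {[X],[Y],[Z]}" by (cases a) auto
  qed (auto simp: NN_def)
  thus ?thesis by blast
qed
lemma NN2: "NN 2 = {[X,Y],[X,Z],[Y,X],[Y,Z],[Z,X],[Z,Y]}"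
proof -
  have "w \<in> NN 2 \<longleftrightarrow> w \<in> {[X,Y],[X,Z],[Y,X],[Y,Z],[Z,X],[Z,Y]}" for w
  proof
    assume "w \<in> NN 2"
    then obtain a b where "w = [a,b]" "a \<noteq> b" by (auto simp: NN_def length_Suc_conv numeral_2_eq_2)
    thus "w \<in> {[X,Y],[X,Z],[Y,X],[Y,Z],[Z,X],[Z,Y]}" by (cases a; cases b) auto
  qed (auto simp: NN_def)
  thus ?thesis by blast
qed

lemma NN_Suc: "NN (Suc k) = (\<lambda>(r,l). l # r) ` (SIGMA r:NN k. {l. nf (l # r)})"
proof (rule set_eqI)
  fix w
  show "w \<in> NN (Suc k) \<longleftrightarrow> w \<in> (\<lambda>(r,l). l # r) ` (SIGMA r:NN k. {l. nf (l # r)})"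
  proof
    assume "w \<in> NN (Suc k)"
    then obtain l r where "w = l # r" "length r = k" "nf (l # r)" by (auto simp: NN_def length_Suc_conv)
    thus "w \<in> (\<lambda>(r,l). l # r) ` (SIGMA r:NN k. {l. nf (l # r)})"
      using nf_cons by (auto simp: NN_def image_iff)
  qed (auto simp: NN_def)
qed

definition Cnd :: "gen list \<Rightarrow> bool" where "Cnd r \<longleftrightarrow> (\<exists>l. nf (l # r) \<and> l \<noteq> hd (tl r))"

lemma card_ext:
  assumes "nf (a # b # r')"
  shows "card {l. nf (l # a # b # r')} = (if Cnd (a # b # r') then 2 else 1)"
proof -
  have ab: "a \<noteq> b" using assms nf_hd by blast
  have bin: "nf (b # a # b # r')" using assms by simp
  show ?thesis
  proof (cases "Cnd (a # b # r')")
    case True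
    then obtain c where c: "nf (c # a # b # r')" "c \<noteq> b" unfolding Cnd_def by auto
    have ca: "c \<noteq> a" using c nf_hd by blast
    have "{l. nf (l # a # b # r')} = {b, c}"
    proof
      show "{l. nf (l # a # b # r')} \<subseteq> {b, c}"
      proof
        fix l assume l: "l \<in> {l. nf (l # a # b # r')}"
        have "l = b \<or> (l \<noteq> a \<and> l \<noteq> b)" using l by auto
        thus "l \<in> {b, c}" using third[of l a b c] ab ca c(2) by auto
      qed
    qed (use bin c in auto)
    thus ?thesis using True c(2) by simp
  next
    case False
    have "{l. nf (l # a # b # r')} = {b}"
      using False bin unfolding Cnd_def by auto
    thus ?thesis using False by simp
  qed
qed

lemma Cnd_set: "{r \<in> NN (Suc (Suc m)). Cnd r} = {altw X Z (Suc (Suc m)), altw Y Z (Suc (Suc m)), altw Z Y (Suc (Suc m))}"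
proof
  show "{r \<in> NN (Suc (Suc m)). Cnd r} \<subseteq> {altw X Z (Suc (Suc m)), altw Y Z (Suc (Suc m)), altw Z Y (Suc (Suc m))}"
  proof
    fix r assume r: "r \<in> {r \<in> NN (Suc (Suc m)). Cnd r}"
    then obtain a b r' where rr: "r = a # b # r'" "length r' = m" by (auto simp: NN_def length_Suc_conv)
    have nfr: "nf r" using r by (simp add: NN_def)
    obtain l where l: "nf (l # r)" "l \<noteq> b" using r rr unfolding Cnd_def by auto
    have la: "l \<noteq> a" using l(1) rr nf_hd by blast
    have h: "alt r" "rk l < rk b" using l la rr by auto
    have ab: "a \<noteq> b" using nfr rr nf_hd by blast
    have "r = altw a b (Suc (Suc m))" using h(1) rr alt_altw by (metis add_2_eq_Suc')
    moreover have "(a,b) \<in> {(X,Z),(Y,Z),(Z,Y)}" using ab la l(2) h(2)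
      by (cases a; cases b; cases l; simp)
    ultimately show "r \<in> {altw X Z (Suc (Suc m)), altw Y Z (Suc (Suc m)), altw Z Y (Suc (Suc m))}" by auto
  qed
next
  have mem: "altw a b (Suc (Suc m)) \<in> {r \<in> NN (Suc (Suc m)). Cnd r}"
    if "a \<noteq> b" "c \<noteq> a" "c \<noteq> b" "rk c < rk b" for a b c
  proof -
    have n: "nf (altw a b (Suc (Suc m))) \<and> alt (altw a b (Suc (Suc m)))" using nf_altw that by blast
    have "nf (c # altw a b (Suc (Suc m)))" using n that by simp
    hence "Cnd (altw a b (Suc (Suc m)))" unfolding Cnd_def using that by auto
    thus ?thesis using n by (simp add: NN_def)
  qed
  show "{altw X Z (Suc (Suc m)), altw Y Z (Suc (Suc m)), altw Z Y (Suc (Suc m))} \<subseteq> {r \<in> NN (Suc (Suc m)). Cnd r}"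
    using mem[of X Z Y] mem[of Y Z X] mem[of Z Y X] by simp
qed

lemma card_step: "card (NN (Suc (Suc (Suc m)))) = card (NN (Suc (Suc m))) + 3"
proof -
  let ?k = "Suc (Suc m)"
  have fin: "finite {l::gen. P l}" for P
    by (rule finite_subset[OF subset_UNIV]) (simp add: UNIV_gen)
  have inj: "inj_on (\<lambda>(r,l). l # r) (SIGMA r:NN ?k. {l. nf (l # r)})"
    by (auto simp: inj_on_def)
  have "card (NN (Suc ?k)) = card (SIGMA r:NN ?k. {l. nf (l # r)})"
    using card_image[OF inj] NN_Suc[of ?k] by simp
  also have "\<dots> = (\<Sum>r\<in>NN ?k. card {l. nf (l # r)})"
    using finite_NN fin by simp
  also have "\<dots> = (\<Sum>r\<in>NN ?k. if Cnd r then 2 else 1)"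
  proof (rule sum.cong[OF refl])
    fix r assume r: "r \<in> NN ?k"
    then obtain a b r' where rr: "r = a # b # r'" by (auto simp: NN_def length_Suc_conv)
    show "card {l. nf (l # r)} = (if Cnd r then 2 else 1)"
      using card_ext[of a b r'] r rr by (simp add: NN_def)
  qed
  also have "\<dots> = (\<Sum>r\<in>NN ?k. 1 + (if Cnd r then 1 else 0))"
    by (rule sum.cong) auto
  also have "\<dots> = (\<Sum>r\<in>NN ?k. 1::nat) + (\<Sum>r\<in>NN ?k. if Cnd r then 1 else 0)"
    by (rule sum.distrib)
  also have "(\<Sum>r\<in>NN ?k. if Cnd r then 1 else 0) = card (NN ?k \<inter> {r. Cnd r})"
    using sum.If_cases[OF finite_NN, of Cnd "\<lambda>_. 1::nat" "\<lambda>_. 0"] by simp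
  also have "(\<Sum>r\<in>NN ?k. 1::nat) = card (NN ?k)" by simp
  also have "NN ?k \<inter> {r. Cnd r} = {r \<in> NN ?k. Cnd r}" by blast
  also have "card \<dots> = 3" unfolding Cnd_set by simp
  finally show ?thesis .
qed

lemma card_NN: "card (NN k) = (if k = 0 then 1 else 3 * k)"
proof -
  have "card (NN (Suc (Suc m))) = 3 * Suc (Suc m)" for m
  proof (induction m)
    case 0 thus ?case by (simp add: NN2[simplified numeral_2_eq_2])
  next
    case (Suc m) thus ?case using card_step[of m] by simp
  qed
  moreover have "card (NN 0) = 1" by (simp add: NN0)
  moreover have "card (NN (Suc 0)) = 3" using NN1 by simp
  ultimately show ?thesis
    by (cases k; cases "k - 1") auto
qed



unbundle fps_syntax

lemma quot_dim:
  assumes w3: "\<omega>^3 = 1" and w1: "\<omega> \<noteq> 1" and t: "t \<noteq> 0"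
  shows "quot_graded_dim (M_ideal \<omega> t) k = card (NN k)"
proof -
  have d: "nc.dim (homog k) = nc.dim (nc.span (JG t) \<inter> homog k) + card (NN k)"
  proof (rule dim_main[where W = "Wk k" and \<Phi> = "phi t"])
    show "nc.subspace (homog k)" by (rule homog_subspace)
    show "nc.subspace (nc.span (JG t))" by (rule nc.subspace_span)
    show "finite (NN k)" by (rule finite_NN)
    show "finite (Wk k)" by (rule finite_Wk)
    show "mono ` NN k \<subseteq> homog k" using mono_homog by (auto simp: NN_def)
    show "homog k \<subseteq> nc.span (mono ` Wk k)" by (rule homog_span)
    show "homog k \<subseteq> nc.span (nc.span (JG t) \<union> mono ` NN k)" by (rule homog_in_span[OF t])
    show "\<And>r p q. phi t r (p + q) = phi t r p + phi t r q" by (rule phi_add)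
    show "\<And>r c p. phi t r (nc_scale c p) = c * phi t r p" by (rule phi_scale)
    show "\<And>r x. r \<in> NN k \<Longrightarrow> x \<in> nc.span (JG t) \<Longrightarrow> phi t r x = 0"
      using phi_J[OF t] nf_live by (auto simp: NN_def)
    show "\<And>r. r \<in> NN k \<Longrightarrow> phi t r (mono r) \<noteq> 0" using phi_self[OF t] by blast
    show "\<And>r r'. r \<in> NN k \<Longrightarrow> r' \<in> NN k \<Longrightarrow> r' \<noteq> r \<Longrightarrow> phi t r (mono r') = 0"
      using phi_other by (auto simp: NN_def)
  qed
  show ?thesis unfolding quot_graded_dim_def ncdim I_eq[OF w3 w1] using d by simp
qed

lemma fps_id: "Abs_fps (\<lambda>k. of_nat (if k = 0 then 1 else 3 * k) :: rat) = (1 - fps_X ^ 3) / (1 - fps_X) ^ 3"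
proof -
  define A :: "rat fps" where "A = Abs_fps (\<lambda>k. of_nat (if k = 0 then 1 else 3 * k))"
  define B1 :: "rat fps" where "B1 = Abs_fps (\<lambda>k. if k = 0 then 1 else if k = 1 then 2 else 3)"
  define B2 :: "rat fps" where "B2 = Abs_fps (\<lambda>k. if k \<le> 2 then 1 else 0)"
  have s1: "A * (1 - fps_X) = B1"
  proof (rule fps_ext)
    fix n
    show "(A * (1 - fps_X)) $ n = B1 $ n"
      by (cases n) (auto simp: A_def B1_def algebra_simps)
  qed
  have s2: "B1 * (1 - fps_X) = B2"
  proof (rule fps_ext)
    fix n
    show "(B1 * (1 - fps_X)) $ n = B2 $ n"
      by (cases n) (auto simp: B1_def B2_def algebra_simps)
  qed
  have s3: "B2 * (1 - fps_X) = 1 - fps_X ^ 3"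
  proof (rule fps_ext)
    fix n
    show "(B2 * (1 - fps_X)) $ n = (1 - fps_X ^ 3 :: rat fps) $ n"
      by (cases n) (auto simp: B2_def algebra_simps fps_X_power_iff)
  qed
  have prod: "A * (1 - fps_X) ^ 3 = 1 - fps_X ^ 3"
    using s1 s2 s3 by (simp add: power3_eq_cube mult.assoc[symmetric])
  have nz: "(1 - fps_X) ^ 3 \<noteq> (0 :: rat fps)"
  proof
    assume "(1 - fps_X) ^ 3 = (0 :: rat fps)"
    hence "(1 - fps_X) = (0 :: rat fps)" by simp
    hence "(1 - fps_X) $ 0 = (0 :: rat fps) $ 0" by simp
    thus False by simp
  qed
  have "(1 - fps_X ^ 3) / (1 - fps_X) ^ 3 = A * (1 - fps_X) ^ 3 / (1 - fps_X) ^ 3" using prod by simp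
  also have "\<dots> = A" using nz by simp
  finally show ?thesis unfolding A_def by simp
qed

theorem mainTheorem10:
  fixes \<omega> t :: complex
  assumes "\<omega> ^ 3 = 1" and "\<omega> \<noteq> 1" and "t \<noteq> 0"
  shows "hilbert_series (M_ideal \<omega> t) = (1 - fps_X ^ 3) / (1 - fps_X) ^ 3"
proof -
  have "hilbert_series (M_ideal \<omega> t) = Abs_fps (\<lambda>k. of_nat (if k = 0 then 1 else 3 * k) :: rat)"
    unfolding hilbert_series_def quot_dim[OF assms] card_NN ..
  thus ?thesis using fps_id by simp
qed

end
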